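(* Let $\beta_1\in(0,1)$, $\beta_0=1-\beta_1$, $\rho\in(0,1)$, $\theta\in(0,1)$, $\lambda\ge 0$ and $N_0>0$. For $s\in[0,1]$ define $$\bar m_2(s)=\frac{\beta_0\rho}{\rho+\beta_1 s(1-\rho)},\qquad \bar m_4(s)=\frac{\beta_1\rho}{\rho+\beta_1 s(1-\rho)},$$ and $$E(s)=\frac{\theta N_0\, s}{1-\theta \bar m_4(s)}+\lambda\big(\bar m_2(s)+\bar m_4(s)\big).$$ If $$N_0\le \frac{\lambda(1-\rho)(1-\beta_1\theta)^2}{\rho\,\theta^2},$$ then $E$ is convex on $[0,1]$.
   Context: Mean-field model of a dense wireless network with two channel states (BAD with probability $\beta_0$, GOOD with probability $\beta_1$, i.i.d. over slots), packet arrival probability $\rho$ per slot, buffer size one, SINR decoding threshold $\theta<1$, noise power $N_0$, and weight $\lambda$ on queue length. The population is described by the fractions $m_1,m_2,m_3,m_4$ of users in states (BAD, empty queue), (BAD, one packet), (GOOD, empty queue), (GOOD, one packet). Only users in state (GOOD, one packet) may be scheduled; $s\in[0,1]$ is the fraction of them that transmit. For a constant control $s$, the equilibrium fractions of the fluid dynamics are $\bar m_1(s)=\frac{\beta_0\beta_1(1-\rho)s}{\rho+\beta_1 s(1-\rho)}$, $\bar m_2(s)$, $\bar m_3(s)=\frac{\beta_1^2(1-\rho)s}{\rho+\beta_1 s(1-\rho)}$, $\bar m_4(s)$ as given, and $E(s)$ is the resulting equilibrium (average) cost: power $\theta N_0 s/(1-\theta\bar m_4(s))$ plus $\lambda$ times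 the fraction of users with a packet. *)

theory Defs
  imports "HOL-Analysis.Analysis"
begin

definition m2bar :: "real \<Rightarrow> real \<Rightarrow> real \<Rightarrow> real" where
  "m2bar \<beta>1 \<rho> s = (1 - \<beta>1) * \<rho> / (\<rho> + \<beta>1 * s * (1 - \<rho>))"

definition m4bar :: "real \<Rightarrow> real \<Rightarrow> real \<Rightarrow> real" where
  "m4bar \<beta>1 \<rho> s = \<beta>1 * \<rho> / (\<rho> + \<beta>1 * s * (1 - \<rho>))"

definition Ecost :: "real \<Rightarrow> real \<Rightarrow> real \<Rightarrow> real \<Rightarrow> real \<Rightarrow> real \<Rightarrow> real" where
  "Ecost \<beta>1 \<rho> \<theta> lam N0 s =
     \<theta> * N0 * s / (1 - \<theta> * m4bar \<beta>1 \<rho> s) + lam * (m2bar \<beta>1 \<rho> s + m4bar \<beta>1 \<rho> s)"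

end

theory Submission
  imports Defs
begin

lemma derivF: fixes a s c r t N x K l :: real assumes "0 < a * s + c" "0 < r + a * s" shows "DERIV (\<lambda>s. t * N * (s + x - K / (a * s + c)) + l * r / (r + a * s)) s :> t * N * (1 + K * a / (a * s + c)^2) - l * r * a / (r + a * s)^2"
  using assms apply (auto intro!: derivative_eq_intros)
  apply (simp add: power2_eq_square algebra_simps)
  done

lemma aux: fixes d e l r a K t N :: real shows "d \<noteq> 0 \<Longrightarrow> e \<noteq> 0 \<Longrightarrow> l*r*a*(2*(a*e))/e^4 - K*a*(2*(a*d))*(t*N)/d^4 = 2*l*r*a^2/e^3 - t*N*(2*K*a^2)/d^3"
  by (simp add: field_simps eval_nat_numeral)

lemma derivF': fixes a s c r t N x K l :: real assumes "0 < a * s + c" "0 < r + a * s" shows "DERIV (\<lambda>s. t * N * (1 + K * a / (a * s + c)^2) - l * r * a / (r + a * s)^2) s :> t * N * (- 2 * K * a^2 / (a * s + c)^3) + 2 * l * r * a^2 / (r + a * s)^3"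
  using assms apply (auto intro!: derivative_eq_intros)
  using aux[of "a * s + c" "r + a * s" l r a K t N] by simp

theorem proposition3:
  fixes \<beta>1 \<rho> \<theta> lam N0 :: real
  assumes "0 < \<beta>1" "\<beta>1 < 1"
    and "0 < \<rho>" "\<rho> < 1"
    and "0 < \<theta>" "\<theta> < 1"
    and "0 \<le> lam"
    and "0 < N0"
    and "N0 \<le> lam * (1 - \<rho>) * (1 - \<beta>1 * \<theta>)^2 / (\<rho> * \<theta>^2)"
  shows "convex_on {0..1} (Ecost \<beta>1 \<rho> \<theta> lam N0)"
proof -
  define a where "a = \<beta>1 * (1 - \<rho>)"
  define c where "c = \<rho> * (1 - \<theta> * \<beta>1)"
  define x where "x = \<rho> * \<theta> * \<beta>1 / a"
  define K where "K = x * c"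
  have a0: "a > 0" using assms by (simp add: a_def)
  have tb: "\<theta> * \<beta>1 < 1" using assms
    using mult_strict_mono[of "\<theta>" 1 "\<beta>1" 1] assms by simp
  have c0: "c > 0" using assms tb by (simp add: c_def)
  have cr: "c < \<rho>" using assms by (simp add: c_def)
  have K0: "K \<ge> 0" using assms a0 c0 by (simp add: K_def x_def)
  have xa: "x * a = \<rho> * \<theta> * \<beta>1" using a0 by (simp add: x_def)
  have cc: "c + \<rho> * \<theta> * \<beta>1 = \<rho>" by (simp add: c_def algebra_simps)
  define F where "F s = \<theta> * N0 * (s + x - K / (a * s + c)) + lam * \<rho> / (\<rho> + a * s)" for s
  define F' where "F' s = \<theta> * N0 * (1 + K * a / (a * s + c)^2) - lam * \<rho> * a / (\<rho> + a * s)^2" for s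
  define F'' where "F'' s = \<theta> * N0 * (- 2 * K * a^2 / (a * s + c)^3) + 2 * lam * \<rho> * a^2 / (\<rho> + a * s)^3" for s
  have pos1: "a * s + c > 0" and pos2: "\<rho> + a * s > 0" if "s \<in> {0..1}" for s
    using that a0 c0 assms by (simp_all add: add_nonneg_pos add_pos_nonneg)
  have eq: "Ecost \<beta>1 \<rho> \<theta> lam N0 s = F s" if s: "s \<in> {0..1}" for s
  proof -
    have p1: "a * s + c > 0" and p2: "\<rho> + a * s > 0" using pos1 pos2 s by auto
    have D: "\<rho> + \<beta>1 * s * (1 - \<rho>) = \<rho> + a * s" by (simp add: a_def)
    have D2: "1 - \<theta> * (\<beta>1 * \<rho> / (\<rho> + a * s)) = (a * s + c) / (\<rho> + a * s)"
      using p2 by (simp add: field_simps c_def)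
    have m: "m2bar \<beta>1 \<rho> s + m4bar \<beta>1 \<rho> s = \<rho> / (\<rho> + a * s)"
      unfolding m2bar_def m4bar_def D using p2 by (simp only: add_divide_distrib[symmetric]) (simp add: algebra_simps)
    have e: "(s + x - K / (a * s + c)) * (a * s + c) = s * (\<rho> + a * s)"
    proof -
      have "(s + x - K / (a * s + c)) * (a * s + c) = s * (a * s + c) + x * (a * s + c) - K"
        using p1 by (simp add: left_diff_distrib distrib_right)
      also have "\<dots> = a * s * s + s * (c + x * a)" by (simp add: K_def algebra_simps)
      also have "\<dots> = s * (\<rho> + a * s)" unfolding xa cc by (simp add: algebra_simps)
      finally show ?thesis .
    qed
    have t: "s / ((a * s + c) / (\<rho> + a * s)) = s + x - K / (a * s + c)"
    proof -
      have "s + x - K / (a * s + c) = s * (\<rho> + a * s) / (a * s + c)"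
        using e p1 by (simp add: eq_divide_eq)
      then show ?thesis by simp
    qed
    have E1: "1 - \<theta> * m4bar \<beta>1 \<rho> s = (a * s + c) / (\<rho> + a * s)"
      unfolding m4bar_def D by (rule D2)
    show ?thesis unfolding Ecost_def F_def m E1 t[symmetric] by simp
  qed
  have d1: "DERIV F s :> F' s" if "s \<in> {0..1}" for s
    using pos1[OF that] pos2[OF that] unfolding F_def F'_def
    by (rule derivF)
  have d2: "DERIV F' s :> F'' s" if "s \<in> {0..1}" for s
    using pos1[OF that] pos2[OF that] unfolding F'_def F''_def
    by (rule derivF')
  have d3: "F'' s \<ge> 0" if s: "s \<in> {0..1}" for s
  proof -
    have p1: "a * s + c > 0" and p2: "\<rho> + a * s > 0" using pos1 pos2 s by auto
    have s0: "s \<ge> 0" using s by auto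
    have r: "c * (\<rho> + a * s) \<le> \<rho> * (a * s + c)"
      using cr a0 s0 mult_right_mono[of c "\<rho>" s] by (simp add: algebra_simps)
    have r3: "(c * (\<rho> + a * s))^3 \<le> (\<rho> * (a * s + c))^3"
      using r c0 p2 by (intro power_mono) auto
    have N: "N0 * (\<rho> * \<theta>^2) \<le> lam * (1 - \<rho>) * (1 - \<beta>1 * \<theta>)^2"
      using assms(9) assms by (simp add: pos_le_divide_eq)
    have key0: "\<theta> * N0 * K * \<rho>^2 \<le> lam * c^3"
    proof -
      have "\<theta> * N0 * K * \<rho>^2 = (N0 * (\<rho> * \<theta>^2)) * (\<rho>^2 * c / (1 - \<rho>))"
        unfolding K_def x_def a_def using assms by (simp add: field_simps power2_eq_square)
      also have "\<dots> \<le> (lam * (1 - \<rho>) * (1 - \<beta>1 * \<theta>)^2) * (\<rho>^2 * c / (1 - \<rho>))"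
        using N c0 assms by (intro mult_right_mono) auto
      also have "\<dots> = lam * c^3"
        unfolding c_def using assms by (simp add: field_simps power2_eq_square power3_eq_cube)
      finally show ?thesis .
    qed
    have key: "\<theta> * N0 * K * (\<rho> + a * s)^3 \<le> lam * \<rho> * (a * s + c)^3"
    proof -
      have "\<theta> * N0 * K * (\<rho> + a * s)^3 * \<rho>^2 = (\<theta> * N0 * K * \<rho>^2) * (\<rho> + a * s)^3"
        by simp
      also have "\<dots> \<le> lam * c^3 * (\<rho> + a * s)^3"
        using key0 p2 by (intro mult_right_mono) auto
      also have "\<dots> = lam * (c * (\<rho> + a * s))^3" by (simp add: power_mult_distrib)
      also have "\<dots> \<le> lam * (\<rho> * (a * s + c))^3"
        using r3 assms(7) by (intro mult_left_mono) auto
      also have "\<dots> = lam * \<rho> * (a * s + c)^3 * \<rho>^2"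
        by (simp add: power_mult_distrib power2_eq_square power3_eq_cube)
      finally show ?thesis using assms(3) by simp
    qed
    have "\<theta> * N0 * K / (a * s + c)^3 \<le> lam * \<rho> / (\<rho> + a * s)^3"
      using key p1 p2 by (simp add: divide_simps)
    then have "2 * a^2 * (\<theta> * N0 * K / (a * s + c)^3) \<le> 2 * a^2 * (lam * \<rho> / (\<rho> + a * s)^3)"
      by (intro mult_left_mono) auto
    then show ?thesis unfolding F''_def by (simp add: field_simps)
  qed
  have cF: "convex_on {0..1} F"
    by (rule f''_ge0_imp_convex[OF convex_real_interval(5) d1 d2 d3])
  show ?thesis
  proof (rule convex_onI)
    fix t x y :: real
    assume h: "0 < t" "t < 1" "x \<in> {0..1}" "y \<in> {0..1}"
    have m: "(1 - t) *\<^sub>R x + t *\<^sub>R y \<in> {0..1}"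
      using h by (metis convexD convex_real_interval(5) diff_add_cancel diff_ge_0_iff_ge less_eq_real_def)
    show "Ecost \<beta>1 \<rho> \<theta> lam N0 ((1 - t) *\<^sub>R x + t *\<^sub>R y)
        \<le> (1 - t) * Ecost \<beta>1 \<rho> \<theta> lam N0 x + t * Ecost \<beta>1 \<rho> \<theta> lam N0 y"
      using convex_onD[OF cF, of t x y] h eq[OF m] eq[OF h(3)] eq[OF h(4)] by simp
  qed (rule convex_real_interval(5))
qed

end
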